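(* Let $n,m\ge 1$, let $A_1,\ldots,A_m$ be real symmetric $n\times n$ matrices and $a_1,\ldots,a_m\in\mathbb{R}^n$, and define $f:\mathbb{R}^n\to\mathbb{R}^m$ by $f(x)=(f_1(x),\ldots,f_m(x))$ with $f_i(x)=\frac12 x^TA_ix+a_i^Tx$. Let $A=[a_1~\ldots~a_m]\in\mathbb{R}^{n\times m}$ and set $$L:=\sqrt{\sum_{i=1}^m\|A_i\|^2},\qquad L_{\rm new}:=\sqrt{\lambda_{\max}\Big(\sum_{i=1}^mA_i^TA_i\Big)},\qquad \nu:=\sigma_{\min}(A)=\sqrt{\lambda_{\min}(A^TA)},$$ where $\|A_i\|=\sqrt{\lambda_{\max}(A_i^TA_i)}$ is the spectral norm. Assume $L_{\rm new}>0$. Then $L_{\rm new}\le L$, and for every $\epsilon<\epsilon^*_{\rm new}:=\nu/(2L_{\rm new})$ the set $$F_m(\epsilon)=\{f(x):~x\in\mathbb{R}^n,~\|x\|\le\epsilon\}$$ is a convex subset of $\mathbb{R}^m$.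
   Context: $\|\cdot\|$ on vectors is the Euclidean norm. $\lambda_{\max},\lambda_{\min}$ denote the largest and smallest eigenvalue of a symmetric matrix, and $\sigma_{\min}(A)$ denotes the smallest singular value of $A$, defined as $\sqrt{\lambda_{\min}(A^TA)}$. *)

theory Defs
  imports "HOL-Analysis.Analysis"
begin

definition eigenvalues :: "real^'n^'n \<Rightarrow> real set" where
  "eigenvalues M = {l. \<exists>v. v \<noteq> 0 \<and> M *v v = l *\<^sub>R v}"

text \<open>Largest / smallest eigenvalue (used for symmetric matrices only,
  where the eigenvalue set is finite and nonempty).\<close>
definition lambda_max :: "real^'n^'n \<Rightarrow> real" where
  "lambda_max M = Max (eigenvalues M)"

definition lambda_min :: "real^'n^'n \<Rightarrow> real" where
  "lambda_min M = Min (eigenvalues M)"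

definition spec_norm :: "real^'n^'n \<Rightarrow> real" where
  "spec_norm M = sqrt (lambda_max (transpose M ** M))"

definition sigma_min :: "real^'m^'n \<Rightarrow> real" where
  "sigma_min A = sqrt (lambda_min (transpose A ** A))"

definition symmetric_mat :: "real^'n^'n \<Rightarrow> bool" where
  "symmetric_mat M \<longleftrightarrow> transpose M = M"

end

theory Submission
  imports Defs
begin


lemma sym_swap:
  fixes M :: "real^'n^'n"
  assumes "symmetric_mat M"
  shows "x \<bullet> (M *v y) = (M *v x) \<bullet> y"
proof -
  have "x \<bullet> (M *v y) = (x v* M) \<bullet> y" by (simp add: dot_lmul_matrix)
  also have "x v* M = transpose M *v x" by simp
  also have "\<dots> = M *v x" using assms by (simp add: symmetric_mat_def)
  finally show ?thesis .
qed

lemma real_aux: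
  fixes QQ NN a b d e p q c t ww :: real
  assumes "QQ = a + t*b + t*b + t^2*d" "NN = e + t*p + t*p + t^2*q" "b - c*p = ww"
  shows "QQ - c*NN = (a - c*e) + 2*t*ww + t^2*(d - c*q)"
proof -
  have "QQ - c*NN = (a - c*e) + 2*t*(b - c*p) + t^2*(d - c*q)"
    unfolding assms(1,2) by (simp add: algebra_simps)
  then show ?thesis unfolding assms(3) .
qed

lemma psd_null:
  fixes M :: "real^'n^'n"
  assumes sym: "symmetric_mat M"
    and ge: "\<And>x. c * (x \<bullet> x) \<le> x \<bullet> (M *v x)"
    and eq: "x0 \<bullet> (M *v x0) = c * (x0 \<bullet> x0)"
  shows "M *v x0 = c *\<^sub>R x0"
proof -
  define g where "g x = x \<bullet> (M *v x) - c * (x \<bullet> x)" for x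
  define w where "w = M *v x0 - c *\<^sub>R x0"
  have g0: "g x \<ge> 0" for x using ge[of x] by (simp add: g_def)
  have exp: "g (x0 + t *\<^sub>R w) = g x0 + 2 * t * (w \<bullet> w) + t^2 * g w" for t
  proof -
    have sw: "x0 \<bullet> (M *v w) = w \<bullet> (M *v x0)"
      using sym_swap[OF sym, of x0 w] inner_commute[of "M *v x0" w] by (rule trans)
    have E1: "(x0 + t *\<^sub>R w) \<bullet> (M *v (x0 + t *\<^sub>R w))
        = x0 \<bullet> (M *v x0) + t * (w \<bullet> (M *v x0)) + t * (w \<bullet> (M *v x0)) + t^2 * (w \<bullet> (M *v w))"
      using sw by (simp add: matrix_vector_right_distrib matrix_vector_mult_scaleR inner_add_left inner_add_right power2_eq_square distrib_left)
    have E2: "(x0 + t *\<^sub>R w) \<bullet> (x0 + t *\<^sub>R w) = x0 \<bullet> x0 + t * (w \<bullet> x0) + t * (w \<bullet> x0) + t^2 * (w \<bullet> w)"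
      using inner_commute[of x0 w]
      by (simp add: inner_add_left inner_add_right power2_eq_square distrib_left)
    have E3: "w \<bullet> (M *v x0) - c * (w \<bullet> x0) = w \<bullet> w"
      by (simp add: w_def inner_diff_right)
    show ?thesis unfolding g_def by (rule real_aux[OF E1 E2 E3])
  qed
  have gx0: "g x0 = 0" using eq by (simp add: g_def)
  show ?thesis
  proof (rule ccontr)
    assume "M *v x0 \<noteq> c *\<^sub>R x0"
    then have wp: "w \<bullet> w > 0" by (simp add: w_def)
    define s where "s = (w \<bullet> w) / (g w + 1)"
    have gw: "g w \<ge> 0" by (rule g0)
    have sp: "s > 0" using wp gw by (simp add: s_def)
    have sg: "s * g w \<le> w \<bullet> w" using wp gw by (simp add: s_def field_simps)
    have "0 \<le> g (x0 + (-s) *\<^sub>R w)" by (rule g0)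
    also have "\<dots> = - 2 * s * (w \<bullet> w) + s^2 * g w" using exp[of "-s"] gx0 by simp
    also have "\<dots> \<le> - 2 * s * (w \<bullet> w) + s * (w \<bullet> w)"
      using sg sp by (simp add: power2_eq_square mult.assoc mult_left_mono)
    also have "\<dots> < 0" using sp wp by (simp add: algebra_simps)
    finally show False by simp
  qed
qed

lemma rayleigh_min:
  fixes M :: "real^'n^'n"
  assumes sym: "symmetric_mat M"
  shows "\<exists>c\<in>eigenvalues M. \<forall>x. c * (x \<bullet> x) \<le> x \<bullet> (M *v x)"
proof -
  have ne: "sphere (0::real^'n) 1 \<noteq> {}"
  proof -
    obtain b :: "real^'n" where "b \<in> Basis" by (meson all_not_in_conv nonempty_Basis)
    then show ?thesis by (metis mem_sphere_0 norm_Basis empty_iff)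
  qed
  have cont: "continuous_on (sphere 0 1) (\<lambda>x::real^'n. x \<bullet> (M *v x))"
    by (intro continuous_intros)
  obtain x0 where x0: "x0 \<in> sphere 0 1" and mn: "\<And>y. y \<in> sphere 0 1 \<Longrightarrow> x0 \<bullet> (M *v x0) \<le> y \<bullet> (M *v y)"
    using continuous_attains_inf[OF compact_sphere ne cont] by blast
  define c where "c = x0 \<bullet> (M *v x0)"
  have n1: "x0 \<bullet> x0 = 1" using x0 by (simp add: dot_square_norm)
  have ge: "c * (x \<bullet> x) \<le> x \<bullet> (M *v x)" for x
  proof (cases "x = 0")
    case True then show ?thesis by simp
  next
    case False
    define u where "u = (1 / norm x) *\<^sub>R x"
    have "u \<in> sphere 0 1" using False by (simp add: u_def)
    then have "c \<le> u \<bullet> (M *v u)" using mn c_def by simp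
    also have "u \<bullet> (M *v u) = (x \<bullet> (M *v x)) / (norm x)^2"
      by (simp add: u_def matrix_vector_mult_scaleR power2_eq_square)
    finally have "c * (norm x)^2 \<le> x \<bullet> (M *v x)" using False by (simp add: field_simps)
    then show ?thesis by (simp add: dot_square_norm)
  qed
  have "M *v x0 = c *\<^sub>R x0" by (rule psd_null[OF sym ge]) (simp add: c_def n1)
  moreover have "x0 \<noteq> 0" using n1 by auto
  ultimately have "c \<in> eigenvalues M" by (auto simp: eigenvalues_def)
  with ge show ?thesis by blast
qed

lemma eig_finite:
  fixes M :: "real^'n^'n"
  assumes sym: "symmetric_mat M"
  shows "finite (eigenvalues M)"
proof -
  define ev where "ev l = (SOME v. v \<noteq> 0 \<and> M *v v = l *\<^sub>R v)" for l
  have evp: "ev l \<noteq> 0 \<and> M *v ev l = l *\<^sub>R ev l" if "l \<in> eigenvalues M" for l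
  proof -
    from that obtain v where "v \<noteq> 0 \<and> M *v v = l *\<^sub>R v" unfolding eigenvalues_def by auto
    then show ?thesis unfolding ev_def by (rule someI)
  qed
  have inj: "inj_on ev (eigenvalues M)"
  proof (rule inj_onI)
    fix l1 l2 assume l: "l1 \<in> eigenvalues M" "l2 \<in> eigenvalues M" "ev l1 = ev l2"
    have e1: "M *v ev l1 = l1 *\<^sub>R ev l1" and nz: "ev l1 \<noteq> 0" using evp[OF l(1)] by auto
    have e2: "M *v ev l1 = l2 *\<^sub>R ev l1" using evp[OF l(2)] l(3) by auto
    from e1 e2 have "l1 *\<^sub>R ev l1 = l2 *\<^sub>R ev l1" by (rule subst)
    then show "l1 = l2" using nz by (metis scaleR_cancel_right)
  qed
  have orth: "pairwise orthogonal (ev ` eigenvalues M)"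
    unfolding pairwise_def
  proof (intro ballI impI)
    fix x y assume "x \<in> ev ` eigenvalues M" "y \<in> ev ` eigenvalues M" "x \<noteq> y"
    then obtain l1 l2 where l: "l1 \<in> eigenvalues M" "l2 \<in> eigenvalues M" and xy: "x = ev l1" "y = ev l2"
      by blast
    have ne: "l1 \<noteq> l2" using xy \<open>x \<noteq> y\<close> by auto
    have e1: "M *v x = l1 *\<^sub>R x" using evp[OF l(1)] xy by simp
    have e2: "M *v y = l2 *\<^sub>R y" using evp[OF l(2)] xy by simp
    have "l2 * (x \<bullet> y) = x \<bullet> (M *v y)" using e2 by simp
    also have "\<dots> = (M *v x) \<bullet> y" by (rule sym_swap[OF sym])
    also have "\<dots> = l1 * (x \<bullet> y)" using e1 by simp
    finally have h: "l2 * (x \<bullet> y) = l1 * (x \<bullet> y)" .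
    have "(l1 - l2) * (x \<bullet> y) = l1 * (x \<bullet> y) - l2 * (x \<bullet> y)" by (rule left_diff_distrib)
    also have "\<dots> = 0" by (simp only: h diff_self)
    finally have "(l1 - l2) * (x \<bullet> y) = 0" .
    then show "orthogonal x y" using ne unfolding orthogonal_def by simp
  qed
  have "0 \<notin> ev ` eigenvalues M"
  proof
    assume "0 \<in> ev ` eigenvalues M"
    then obtain l where "0 = ev l" "l \<in> eigenvalues M" by (rule imageE)
    then show False using evp[of l] by simp
  qed
  then have "independent (ev ` eigenvalues M)" by (rule pairwise_orthogonal_independent[OF orth])
  then have "finite (ev ` eigenvalues M)" by (rule independent_bound[THEN conjunct1])
  then show ?thesis by (rule finite_imageD[OF _ inj])
qed

lemma eig_quad:
  fixes M :: "real^'n^'n"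
  assumes "l \<in> eigenvalues M"
  obtains v where "v \<bullet> v = 1" "M *v v = l *\<^sub>R v"
proof -
  obtain v where v: "v \<noteq> 0" "M *v v = l *\<^sub>R v" using assms by (auto simp: eigenvalues_def)
  define u where "u = (1 / norm v) *\<^sub>R v"
  have "u \<bullet> u = 1" using v by (simp add: u_def dot_square_norm)
  moreover have "M *v u = l *\<^sub>R u" using v by (simp add: u_def matrix_vector_mult_scaleR)
  ultimately show ?thesis using that by blast
qed

lemma lambda_min_prop:
  fixes M :: "real^'n^'n"
  assumes sym: "symmetric_mat M"
  shows "lambda_min M \<in> eigenvalues M" "\<And>x. lambda_min M * (x \<bullet> x) \<le> x \<bullet> (M *v x)"
proof -
  obtain c where c: "c \<in> eigenvalues M" and ge: "\<And>x. c * (x \<bullet> x) \<le> x \<bullet> (M *v x)"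
    using rayleigh_min[OF sym] by blast
  have "lambda_min M = c" unfolding lambda_min_def
  proof (rule Min_eqI[OF eig_finite[OF sym] _ c])
    fix l assume "l \<in> eigenvalues M"
    then obtain v where "v \<bullet> v = 1" "M *v v = l *\<^sub>R v" by (rule eig_quad)
    then show "c \<le> l" using ge[of v] by simp
  qed
  then show "lambda_min M \<in> eigenvalues M" "\<And>x. lambda_min M * (x \<bullet> x) \<le> x \<bullet> (M *v x)"
    using c ge by auto
qed


lemma lambda_max_prop:
  fixes M :: "real^'n^'n"
  assumes sym: "symmetric_mat M"
  shows "lambda_max M \<in> eigenvalues M" "\<And>x. x \<bullet> (M *v x) \<le> lambda_max M * (x \<bullet> x)"
proof -
  have nsym: "symmetric_mat (-M)" using sym
    by (simp add: symmetric_mat_def transpose_def vec_eq_iff)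
  have neg: "(-M) *v x = - (M *v x)" for x
    by (simp add: matrix_vector_mult_def vec_eq_iff sum_negf)
  obtain c where c: "c \<in> eigenvalues (-M)" and ge: "\<And>x. c * (x \<bullet> x) \<le> x \<bullet> ((-M) *v x)"
    using rayleigh_min[OF nsym] by blast
  from c obtain v where v: "v \<noteq> 0" "(-M) *v v = c *\<^sub>R v" unfolding eigenvalues_def by auto
  have "- (- (M *v v)) = - (c *\<^sub>R v)" using v(2) unfolding neg by (simp only:)
  then have "M *v v = (-c) *\<^sub>R v" by simp
  with v(1) have c': "-c \<in> eigenvalues M" unfolding eigenvalues_def by auto
  have le: "x \<bullet> (M *v x) \<le> (-c) * (x \<bullet> x)" for x using ge[of x] by (simp add: neg)
  have "lambda_max M = -c" unfolding lambda_max_def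
  proof (rule Max_eqI[OF eig_finite[OF sym] _ c'])
    fix l assume "l \<in> eigenvalues M"
    then obtain v where "v \<bullet> v = 1" "M *v v = l *\<^sub>R v" by (rule eig_quad)
    then show "l \<le> -c" using le[of v] by simp
  qed
  then show "lambda_max M \<in> eigenvalues M" "\<And>x. x \<bullet> (M *v x) \<le> lambda_max M * (x \<bullet> x)"
    using c' le by auto
qed



lemma quad_expand:
  fixes Q :: "real^'n^'n"
  assumes "symmetric_mat Q"
  shows "(x + v) \<bullet> (Q *v (x + v)) = x \<bullet> (Q *v x) + 2 * ((Q *v x) \<bullet> v) + v \<bullet> (Q *v v)"
proof -
  have "(x + v) \<bullet> (Q *v (x + v)) = x \<bullet> (Q *v x) + x \<bullet> (Q *v v) + (v \<bullet> (Q *v x) + v \<bullet> (Q *v v))"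
    by (simp add: matrix_vector_right_distrib inner_add_left inner_add_right)
  moreover have "x \<bullet> (Q *v v) = (Q *v x) \<bullet> v" by (rule sym_swap[OF assms])
  moreover have "v \<bullet> (Q *v x) = (Q *v x) \<bullet> v" by (rule inner_commute)
  ultimately show ?thesis by linarith
qed

lemma f_expand:
  fixes Q :: "'m::finite \<Rightarrow> real^'n::finite^'n" and a :: "'m \<Rightarrow> real^'n" and f :: "real^'n \<Rightarrow> real^'m"
  assumes sym: "\<And>i. symmetric_mat (Q i)"
    and f_def: "\<And>x. f x = (\<chi> i. (1/2) * (x \<bullet> (Q i *v x)) + a i \<bullet> x)"
  shows "f (x + v) $ i = f x $ i + (Q i *v x + a i) \<bullet> v + (1/2) * (v \<bullet> (Q i *v v))"
proof -
  have "f (x + v) $ i = (1/2) * ((x + v) \<bullet> (Q i *v (x + v))) + a i \<bullet> (x + v)" by (simp add: f_def)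
  also have "\<dots> = (1/2) * (x \<bullet> (Q i *v x) + 2 * ((Q i *v x) \<bullet> v) + v \<bullet> (Q i *v v)) + (a i \<bullet> x + a i \<bullet> v)"
    by (simp only: quad_expand[OF sym] inner_add_right)
  also have "\<dots> = f x $ i + (Q i *v x + a i) \<bullet> v + (1/2) * (v \<bullet> (Q i *v v))"
    by (simp add: f_def inner_add_left inner_commute[of "a i" v] algebra_simps)
  finally show ?thesis .
qed

lemma vnorm2: "(norm (w::real^'m))^2 = (\<Sum>i\<in>UNIV. (w $ i)^2)"
  unfolding power2_norm_eq_inner inner_vec_def by (simp add: power2_eq_square)

lemma vnorm_le:
  fixes c :: "'m::finite \<Rightarrow> real"
  assumes "(\<Sum>i\<in>UNIV. (c i)^2) \<le> K^2" "K \<ge> 0"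
  shows "norm (\<chi> i. c i) \<le> K"
proof -
  have "(norm (\<chi> i. c i))^2 \<le> K^2" using assms(1) by (simp add: vnorm2)
  then show ?thesis using assms(2) by (rule power2_le_imp_le)
qed

lemma sum_mv: "(sum M S) *v x = (\<Sum>i\<in>S. M i *v x)"
  by (induction S rule: infinite_finite_induct) (auto simp: matrix_vector_mult_add_rdistrib)

lemma quad_QtQ:
  fixes Q :: "real^'a^'b"
  shows "h \<bullet> ((transpose Q ** Q) *v h) = (norm (Q *v h))^2"
proof -
  have "h \<bullet> ((transpose Q ** Q) *v h) = h \<bullet> (transpose Q *v (Q *v h))" by (simp add: matrix_vector_mul_assoc)
  also have "\<dots> = (Q *v h) \<bullet> (Q *v h)"
    using dot_lmul_matrix[of "Q *v h" Q h] by (simp add: inner_commute[of h])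
  finally show ?thesis by (simp add: power2_norm_eq_inner)
qed

lemma sym_QtQ: "symmetric_mat (transpose Q ** (Q::real^'a^'b))"
  by (simp add: symmetric_mat_def matrix_transpose_mul)

lemma sym_sum:
  assumes "\<And>i. symmetric_mat (M i :: real^'n^'n)"
  shows "symmetric_mat (sum M S)"
proof -
  have "transpose (M i) $ r $ c = M i $ r $ c" for i r c using assms[of i] by (simp add: symmetric_mat_def)
  then show ?thesis
    by (simp add: symmetric_mat_def transpose_def vec_eq_iff sum_component)
qed

lemma Jt_bound:
  fixes Q :: "'m::finite \<Rightarrow> real^'n::finite^'n" and a :: "'m \<Rightarrow> real^'n"
  assumes Abnd: "\<And>w::real^'m. \<nu> * norm w \<le> norm (\<Sum>k\<in>UNIV. w$k *\<^sub>R a k)"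
    and Qbnd: "\<And>h. (\<Sum>i\<in>UNIV. (norm (Q i *v h))^2) \<le> L^2 * (norm h)^2"
    and Lpos: "L \<ge> 0"
  shows "(\<nu> - L * norm x) * norm w \<le> norm (\<Sum>i\<in>UNIV. w$i *\<^sub>R (Q i *v x + a i))"
proof -
  have split: "(\<Sum>i\<in>UNIV. w$i *\<^sub>R (Q i *v x + a i)) = (\<Sum>i\<in>UNIV. w$i *\<^sub>R a i) + (\<Sum>i\<in>UNIV. w$i *\<^sub>R (Q i *v x))"
    by (simp add: scaleR_add_right sum.distrib)
  have "norm (\<Sum>i\<in>UNIV. w$i *\<^sub>R (Q i *v x)) \<le> (\<Sum>i\<in>UNIV. norm (w$i *\<^sub>R (Q i *v x)))"
    by (rule norm_sum)
  also have "\<dots> = (\<Sum>i\<in>UNIV. \<bar>w$i\<bar> * norm (Q i *v x))" by simp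
  also have "\<dots> \<le> norm w * (L * norm x)"
  proof (rule power2_le_imp_le)
    have "(\<Sum>i\<in>UNIV. \<bar>w$i\<bar> * norm (Q i *v x))^2 \<le> (\<Sum>i\<in>UNIV. \<bar>w$i\<bar>^2) * (\<Sum>i\<in>UNIV. (norm (Q i *v x))^2)"
      by (rule Cauchy_Schwarz_ineq_sum)
    also have "\<dots> \<le> (norm w)^2 * (L^2 * (norm x)^2)"
    proof -
      have "(\<Sum>i\<in>UNIV. \<bar>w$i\<bar>^2) = (norm w)^2" by (simp add: vnorm2)
      then show ?thesis using mult_left_mono[OF Qbnd[of x], of "(norm w)^2"] by simp
    qed
    also have "\<dots> = (norm w * (L * norm x))^2" by (simp add: power_mult_distrib)
    finally show "(\<Sum>i\<in>UNIV. \<bar>w$i\<bar> * norm (Q i *v x))^2 \<le> (norm w * (L * norm x))^2" .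
    show "0 \<le> norm w * (L * norm x)" using Lpos by simp
  qed
  finally have b2: "norm (\<Sum>i\<in>UNIV. w$i *\<^sub>R (Q i *v x)) \<le> norm w * (L * norm x)" .
  have "\<nu> * norm w \<le> norm (\<Sum>i\<in>UNIV. w$i *\<^sub>R (Q i *v x + a i)) + norm (\<Sum>i\<in>UNIV. w$i *\<^sub>R (Q i *v x))"
    using Abnd[of w] norm_triangle_ineq4[of "\<Sum>i\<in>UNIV. w$i *\<^sub>R (Q i *v x + a i)" "\<Sum>i\<in>UNIV. w$i *\<^sub>R (Q i *v x)"]
    unfolding split by simp
  with b2 show ?thesis by (simp add: algebra_simps)
qed

lemma descent_dir:
  fixes Q :: "'m::finite \<Rightarrow> real^'n::finite^'n" and a :: "'m \<Rightarrow> real^'n"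
  assumes Abnd: "\<And>w::real^'m. \<nu> * norm w \<le> norm (\<Sum>k\<in>UNIV. w$k *\<^sub>R a k)"
    and Qbnd: "\<And>h. (\<Sum>i\<in>UNIV. (norm (Q i *v h))^2) \<le> L^2 * (norm h)^2"
    and Lpos: "L \<ge> 0"
    and mpos: "\<nu> - L * norm x > 0"
  shows "\<exists>v. (\<forall>i. (Q i *v x + a i) \<bullet> v = - (r $ i)) \<and> (\<nu> - L * norm x) * norm v \<le> norm r"
proof -
  define \<mu> where "\<mu> = \<nu> - L * norm x"
  define Jm :: "real^'n^'m" where "Jm = (\<chi> i j. (Q i *v x + a i) $ j)"
  have Jv: "(Jm *v v) $ i = (Q i *v x + a i) \<bullet> v" for v i
    by (simp add: Jm_def matrix_vector_mult_def inner_vec_def)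
  have Jt: "transpose Jm *v w = (\<Sum>i\<in>UNIV. w$i *\<^sub>R (Q i *v x + a i))" for w
    unfolding vec_eq_iff
  proof
    fix j
    show "(transpose Jm *v w) $ j = (\<Sum>i\<in>UNIV. w$i *\<^sub>R (Q i *v x + a i)) $ j"
      by (simp add: Jm_def transpose_def matrix_vector_mult_def sum_component mult_ac)
  qed
  have adj: "(Jm *v v) \<bullet> w = v \<bullet> (transpose Jm *v w)" for v w
  proof -
    have "(Jm *v v) \<bullet> w = w \<bullet> (Jm *v v)" by (rule inner_commute)
    also have "\<dots> = (w v* Jm) \<bullet> v" by (rule dot_lmul_matrix[symmetric])
    also have "\<dots> = v \<bullet> (w v* Jm)" by (rule inner_commute)
    finally show ?thesis by simp
  qed
  have low: "\<mu> * norm w \<le> norm (transpose Jm *v w)" for w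
    unfolding Jt \<mu>_def by (rule Jt_bound[OF Abnd Qbnd Lpos])
  define G where "G w = Jm *v (transpose Jm *v w)" for w
  have Gq: "w \<bullet> G w = (norm (transpose Jm *v w))^2" for w
  proof -
    have "w \<bullet> G w = (Jm *v (transpose Jm *v w)) \<bullet> w" unfolding G_def by (rule inner_commute)
    also have "\<dots> = (transpose Jm *v w) \<bullet> (transpose Jm *v w)" by (rule adj)
    finally show ?thesis by (simp only: power2_norm_eq_inner)
  qed
  have linG: "linear G"
  proof -
    have "G = (\<lambda>w. (Jm ** transpose Jm) *v w)" unfolding G_def by (simp only: matrix_vector_mul_assoc)
    then show ?thesis by (simp only: matrix_vector_mul_linear)
  qed
  have injG: "inj G"
  proof (rule injI)
    fix w1 w2 assume e: "G w1 = G w2"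
    have "G (w1 - w2) = G w1 - G w2" unfolding G_def by (simp add: matrix_vector_mult_diff_distrib)
    then have "G (w1 - w2) = 0" using e by simp
    then have "(norm (transpose Jm *v (w1 - w2)))^2 = 0" using Gq[of "w1 - w2"] by simp
    then have "\<mu> * norm (w1 - w2) \<le> 0" using low[of "w1 - w2"] by simp
    then have "norm (w1 - w2) \<le> 0" using mpos \<mu>_def by (simp add: mult_le_0_iff)
    then show "w1 = w2" by simp
  qed
  have "surj G" by (rule linear_injective_imp_surjective[OF linG injG]) simp
  then obtain w where w: "G w = - r" by (metis surjD)
  define v where "v = transpose Jm *v w"
  have Jvr: "Jm *v v = - r" using w by (simp add: G_def v_def)
  have vv: "norm v ^ 2 = - (r \<bullet> w)"
  proof -
    have "norm v ^ 2 = v \<bullet> (transpose Jm *v w)" by (simp add: v_def power2_norm_eq_inner)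
    also have "\<dots> = (Jm *v v) \<bullet> w" by (rule adj[symmetric])
    finally show ?thesis using Jvr by simp
  qed
  have "norm v ^ 2 \<le> norm r * norm w"
    using vv Cauchy_Schwarz_ineq2[of r w] abs_ge_minus_self[of "r \<bullet> w"] by linarith
  moreover have "\<mu> * norm w \<le> norm v" using low[of w] by (simp add: v_def)
  ultimately have "\<mu> * norm v ^ 2 \<le> norm r * norm v"
  proof -
    assume A: "norm v ^ 2 \<le> norm r * norm w" and B: "\<mu> * norm w \<le> norm v"
    have mp: "\<mu> \<ge> 0" using mpos \<mu>_def by simp
    have "\<mu> * norm v ^ 2 \<le> \<mu> * (norm r * norm w)" using A mp by (rule mult_left_mono)
    also have "\<dots> = norm r * (\<mu> * norm w)" by simp
    also have "\<dots> \<le> norm r * norm v" using B by (rule mult_left_mono) simp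
    finally show ?thesis .
  qed
  then have "\<mu> * norm v \<le> norm r"
  proof (cases "norm v = 0")
    case True then show ?thesis by simp
  next
    case False
    assume h: "\<mu> * norm v ^ 2 \<le> norm r * norm v"
    have "(\<mu> * norm v) * norm v \<le> norm r * norm v" using h by (simp add: power2_eq_square mult.assoc)
    moreover have "norm v > 0" using False by simp
    ultimately show ?thesis by (rule mult_right_le_imp_le)
  qed
  moreover have "\<forall>i. (Q i *v x + a i) \<bullet> v = - (r $ i)"
  proof
    fix i
    have "(Q i *v x + a i) \<bullet> v = (Jm *v v) $ i" by (rule Jv[symmetric])
    also have "\<dots> = - (r $ i)" unfolding Jvr by simp
    finally show "(Q i *v x + a i) \<bullet> v = - (r $ i)" .
  qed
  ultimately show ?thesis unfolding \<mu>_def by blast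
qed

lemma exist_preimage:
  fixes Q :: "'m::finite \<Rightarrow> real^'n::finite^'n" and a :: "'m \<Rightarrow> real^'n" and f :: "real^'n \<Rightarrow> real^'m"
  assumes sym: "\<And>i. symmetric_mat (Q i)"
    and f_def: "\<And>x. f x = (\<chi> i. (1/2) * (x \<bullet> (Q i *v x)) + a i \<bullet> x)"
    and Abnd: "\<And>w::real^'m. \<nu> * norm w \<le> norm (\<Sum>k\<in>UNIV. w$k *\<^sub>R a k)"
    and Qbnd: "\<And>h. (\<Sum>i\<in>UNIV. (norm (Q i *v h))^2) \<le> L^2 * (norm h)^2"
    and Lpos: "L > 0"
    and zle: "norm z \<le> \<epsilon>"
    and close: "norm (f z - y) < (\<nu> - L * \<epsilon>) * (\<epsilon> - norm z)"
  shows "\<exists>x. norm x \<le> \<epsilon> \<and> f x = y"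
proof -
  define \<mu>' where "\<mu>' = \<nu> - L * \<epsilon>"
  have ez: "\<epsilon> - norm z \<ge> 0" using zle by simp
  have pp: "0 < \<mu>' * (\<epsilon> - norm z)" unfolding \<mu>'_def using close norm_ge_zero[of "f z - y"] by linarith
  have mu'pos: "\<mu>' > 0"
  proof (rule ccontr)
    assume "\<not> \<mu>' > 0"
    then have "\<mu>' * (\<epsilon> - norm z) \<le> 0" using ez by (simp add: mult_nonpos_nonneg)
    with pp show False by simp
  qed
  have fe: "f = (\<lambda>x. \<chi> i. (1/2) * (x \<bullet> (Q i *v x)) + a i \<bullet> x)" using f_def by (rule ext)
  have contf: "continuous_on S f" for S unfolding fe by (intro continuous_intros)
  define \<psi> where "\<psi> x = norm (f x - y) + \<mu>' * norm (x - z)" for x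
  have contpsi: "continuous_on (cball 0 \<epsilon>) \<psi>" unfolding \<psi>_def
    by (intro continuous_intros contf)
  have zin: "z \<in> cball 0 \<epsilon>" using zle by simp
  obtain xs where xs: "xs \<in> cball 0 \<epsilon>" and mn: "\<And>x. x \<in> cball 0 \<epsilon> \<Longrightarrow> \<psi> xs \<le> \<psi> x"
    using continuous_attains_inf[OF compact_cball _ contpsi] zin by blast
  have "\<psi> xs \<le> \<psi> z" using mn zin by blast
  moreover have "\<psi> z = norm (f z - y)" by (simp add: \<psi>_def)
  ultimately have "\<mu>' * norm (xs - z) \<le> norm (f z - y)" unfolding \<psi>_def
    using norm_ge_zero[of "f xs - y"] by linarith
  then have "\<mu>' * norm (xs - z) < \<mu>' * (\<epsilon> - norm z)" using close \<mu>'_def by simp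
  then have "norm (xs - z) < \<epsilon> - norm z" using mu'pos by simp
  moreover have "norm xs \<le> norm z + norm (xs - z)" by (metis add.commute diff_add_cancel norm_triangle_ineq)
  ultimately have xlt: "norm xs < \<epsilon>" by simp
  show ?thesis
  proof (rule ccontr)
    assume no: "\<not> (\<exists>x. norm x \<le> \<epsilon> \<and> f x = y)"
    define r where "r = f xs - y"
    have rnz: "r \<noteq> 0" using no xlt by (auto simp: r_def)
    have lt: "\<mu>' < \<nu> - L * norm xs" using Lpos xlt \<mu>'_def by simp
    then have mpos: "\<nu> - L * norm xs > 0" using mu'pos by simp
    obtain v where vJ: "\<forall>i. (Q i *v xs + a i) \<bullet> v = - (r $ i)" and vb: "(\<nu> - L * norm xs) * norm v \<le> norm r"
      using descent_dir[OF Abnd Qbnd _ mpos, of r] Lpos by auto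
    define R :: "real^'m" where "R = (\<chi> i. (1/2) * (v \<bullet> (Q i *v v)))"
    have step: "f (xs + t *\<^sub>R v) - y = (1 - t) *\<^sub>R r + t^2 *\<^sub>R R" for t
      unfolding vec_eq_iff
    proof
      fix i
      have "f (xs + t *\<^sub>R v) $ i = f xs $ i + (Q i *v xs + a i) \<bullet> (t *\<^sub>R v) + (1/2) * ((t *\<^sub>R v) \<bullet> (Q i *v (t *\<^sub>R v)))"
        by (rule f_expand[OF sym f_def])
      also have "\<dots> = f xs $ i + t * ((Q i *v xs + a i) \<bullet> v) + t^2 * ((1/2) * (v \<bullet> (Q i *v v)))"
        by (simp add: matrix_vector_mult_scaleR power2_eq_square)
      also have "\<dots> = f xs $ i - t * (r $ i) + t^2 * (R $ i)" using vJ by (simp add: R_def)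
      finally show "(f (xs + t *\<^sub>R v) - y) $ i = ((1 - t) *\<^sub>R r + t^2 *\<^sub>R R) $ i"
        by (simp add: r_def algebra_simps)
    qed
    define \<delta> where "\<delta> = norm r - \<mu>' * norm v"
    have dpos: "\<delta> > 0"
    proof (cases "v = 0")
      case True then show ?thesis using rnz by (simp add: \<delta>_def)
    next
      case False
      then have "\<mu>' * norm v < (\<nu> - L * norm xs) * norm v" using lt by simp
      then show ?thesis using vb by (simp add: \<delta>_def)
    qed
    have bound: "\<psi> (xs + t *\<^sub>R v) \<le> \<psi> xs - t * \<delta> + t^2 * norm R" if t: "0 \<le> t" "t \<le> 1" for t
    proof -
      have "norm (f (xs + t *\<^sub>R v) - y) \<le> norm ((1 - t) *\<^sub>R r) + norm (t^2 *\<^sub>R R)"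
        unfolding step by (rule norm_triangle_ineq)
      also have "\<dots> = (1 - t) * norm r + t^2 * norm R" using t by simp
      finally have n1: "norm (f (xs + t *\<^sub>R v) - y) \<le> (1 - t) * norm r + t^2 * norm R" .
      have "norm (xs + t *\<^sub>R v - z) \<le> norm (xs - z) + norm (t *\<^sub>R v)"
        by (metis add_diff_eq diff_add_eq norm_triangle_ineq add.commute)
      also have "\<dots> = norm (xs - z) + t * norm v" using t by simp
      finally have "\<mu>' * norm (xs + t *\<^sub>R v - z) \<le> \<mu>' * (norm (xs - z) + t * norm v)"
        using mu'pos by (simp add: mult_left_mono)
      with n1 show ?thesis unfolding \<psi>_def \<delta>_def r_def[symmetric] by (simp add: algebra_simps)
    qed
    define t where "t = min 1 (min (\<delta> / (2 * (norm R + 1))) ((\<epsilon> - norm xs) / (norm v + 1)))"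
    have t0: "t > 0"
    proof -
      have "\<delta> / (2 * (norm R + 1)) > 0" using dpos by (intro divide_pos_pos) (auto intro: add_nonneg_pos)
      moreover have "(\<epsilon> - norm xs) / (norm v + 1) > 0" using xlt by (intro divide_pos_pos) (auto intro: add_nonneg_pos)
      ultimately show ?thesis by (simp add: t_def)
    qed
    have t1: "t \<le> 1" by (simp add: t_def)
    have tR: "t * norm R \<le> \<delta> / 2"
    proof -
      have "t \<le> \<delta> / (2 * (norm R + 1))" by (simp add: t_def)
      moreover have c: "2 * (norm R + 1) > 0" by (smt (verit) norm_ge_zero)
      ultimately have "t * (2 * (norm R + 1)) \<le> \<delta>" by (simp only: pos_le_divide_eq[OF c])
      then show ?thesis using t0 by (simp add: algebra_simps)
    qed
    have tv: "t * norm v \<le> \<epsilon> - norm xs"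
    proof -
      have "t \<le> (\<epsilon> - norm xs) / (norm v + 1)" by (simp add: t_def)
      moreover have c: "norm v + 1 > 0" by (smt (verit) norm_ge_zero)
      ultimately have "t * (norm v + 1) \<le> \<epsilon> - norm xs" by (simp only: pos_le_divide_eq[OF c])
      then show ?thesis using t0 by (simp add: algebra_simps)
    qed
    have "norm (xs + t *\<^sub>R v) \<le> norm xs + t * norm v"
      using norm_triangle_ineq[of xs "t *\<^sub>R v"] t0 by simp
    then have inb: "xs + t *\<^sub>R v \<in> cball 0 \<epsilon>" using tv by simp
    have "\<psi> (xs + t *\<^sub>R v) \<le> \<psi> xs - t * \<delta> + t^2 * norm R" using bound t0 t1 by simp
    also have "t^2 * norm R = t * (t * norm R)" by (simp add: power2_eq_square)
    also have "\<dots> \<le> t * (\<delta> / 2)" using tR t0 by (simp add: mult_left_mono)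
    finally have h: "\<psi> (xs + t *\<^sub>R v) \<le> \<psi> xs - t * \<delta> + t * (\<delta> / 2)" by simp
    have "t * \<delta> > 0" using t0 dpos by simp
    with h have "\<psi> (xs + t *\<^sub>R v) < \<psi> xs" by linarith
    with mn[OF inb] show False by simp
  qed
qed



lemma mv_neg: "(M::real^'a^'b) *v (- x) = - (M *v x)"
  using matrix_vector_mult_scaleR[of M "-1" x] by simp

lemma norm_comb:
  fixes x1 x2 :: "'a::real_inner"
  assumes "u + w = 1"
  shows "(norm (u *\<^sub>R x1 + w *\<^sub>R x2))^2 = u * (norm x1)^2 + w * (norm x2)^2 - u * w * (norm (x1 - x2))^2"
proof -
  have c: "x2 \<bullet> x1 = x1 \<bullet> x2" by (rule inner_commute)
  have e1: "(norm (u *\<^sub>R x1 + w *\<^sub>R x2))^2 = u^2 * (x1 \<bullet> x1) + 2*u*w*(x1 \<bullet> x2) + w^2 * (x2 \<bullet> x2)"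
    unfolding power2_norm_eq_inner by (simp add: inner_add_left inner_add_right c power2_eq_square algebra_simps)
  have e2: "(norm (x1 - x2))^2 = x1 \<bullet> x1 - 2 * (x1 \<bullet> x2) + x2 \<bullet> x2"
    unfolding power2_norm_eq_inner by (simp add: inner_diff_left inner_diff_right c)
  have w: "w = 1 - u" using assms by simp
  show ?thesis unfolding e1 e2 power2_norm_eq_inner w by (simp add: algebra_simps power2_eq_square)
qed

lemma image_convex:
  fixes Q :: "'m::finite \<Rightarrow> real^'n::finite^'n" and a :: "'m \<Rightarrow> real^'n" and f :: "real^'n \<Rightarrow> real^'m"
  assumes sym: "\<And>i. symmetric_mat (Q i)"
    and f_def: "\<And>x. f x = (\<chi> i. (1/2) * (x \<bullet> (Q i *v x)) + a i \<bullet> x)"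
    and Abnd: "\<And>w::real^'m. \<nu> * norm w \<le> norm (\<Sum>k\<in>UNIV. w$k *\<^sub>R a k)"
    and Qbnd: "\<And>h. (\<Sum>i\<in>UNIV. (norm (Q i *v h))^2) \<le> L^2 * (norm h)^2"
    and Lpos: "L > 0"
    and eps: "2 * L * \<epsilon> < \<nu>"
  shows "convex {f x | x. norm x \<le> \<epsilon>}"
proof (rule convexI)
  fix Y1 Y2 and u w :: real
  assume Y1: "Y1 \<in> {f x | x. norm x \<le> \<epsilon>}" and Y2: "Y2 \<in> {f x | x. norm x \<le> \<epsilon>}"
    and uw0: "0 \<le> u" "0 \<le> w" and uwe: "u + w = 1"
  have uw: "0 \<le> u \<and> 0 \<le> w \<and> u + w = 1" using uw0 uwe by simp
  obtain x1 where x1: "norm x1 \<le> \<epsilon>" "Y1 = f x1" using Y1 by blast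
  obtain x2 where x2: "norm x2 \<le> \<epsilon>" "Y2 = f x2" using Y2 by blast
  have u0: "u \<ge> 0" and w0: "w \<ge> 0" and uw1: "u + w = 1" using uw by auto
  define z where "z = u *\<^sub>R x1 + w *\<^sub>R x2"
  define d where "d = x1 - x2"
  define Y where "Y = u *\<^sub>R Y1 + w *\<^sub>R Y2"
  have ex1: "x1 = z + w *\<^sub>R d"
  proof -
    have "z + w *\<^sub>R d = (u + w) *\<^sub>R x1" by (simp add: z_def d_def algebra_simps)
    then show ?thesis using uw1 by simp
  qed
  have ex2: "x2 = z + (-u) *\<^sub>R d"
  proof -
    have "z + (-u) *\<^sub>R d = (u + w) *\<^sub>R x2" by (simp add: z_def d_def algebra_simps)
    then show ?thesis using uw1 by simp
  qed
  define q where "q i = d \<bullet> (Q i *v d)" for i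
  have diff: "f z - Y = (\<chi> i. - ((1/2) * (u * w) * q i))"
    unfolding vec_eq_iff
  proof
    fix i
    define g where "g = (Q i *v z + a i) \<bullet> d"
    have f1: "f x1 $ i = f z $ i + w * g + (1/2) * (w^2 * q i)"
      unfolding ex1 f_expand[OF sym f_def] g_def q_def
      by (simp add: matrix_vector_mult_scaleR power2_eq_square)
    have f2: "f x2 $ i = f z $ i - u * g + (1/2) * (u^2 * q i)"
      unfolding ex2 f_expand[OF sym f_def] g_def q_def
      by (simp add: matrix_vector_mult_scaleR mv_neg power2_eq_square)
    have "Y $ i = u * f x1 $ i + w * f x2 $ i" by (simp add: Y_def x1 x2)
    also have "\<dots> = (u + w) * f z $ i + (1/2) * (u * w) * (u + w) * q i"
      unfolding f1 f2 by (simp add: algebra_simps power2_eq_square)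
    also have "\<dots> = f z $ i + (1/2) * (u * w) * q i" using uw1 by simp
    finally show "(f z - Y) $ i = (\<chi> i. - ((1/2) * (u * w) * q i)) $ i" by simp
  qed
  define k where "k = u * w * (norm d)^2"
  have k0: "k \<ge> 0" using u0 w0 by (simp add: k_def)
  have fzY: "norm (f z - Y) \<le> L * k / 2"
    unfolding diff
  proof (rule vnorm_le)
    have "(\<Sum>i\<in>UNIV. (- ((1/2) * (u * w) * q i))^2) = ((1/2) * (u * w))^2 * (\<Sum>i\<in>UNIV. (q i)^2)"
    proof -
      have eqi: "(- ((1/2) * (u * w) * q i))^2 = ((1/2) * (u * w))^2 * (q i)^2" for i
        by (simp add: power2_eq_square)
      have "(\<Sum>i\<in>UNIV. (- ((1/2) * (u * w) * q i))^2) = (\<Sum>i\<in>UNIV. ((1/2) * (u * w))^2 * (q i)^2)"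
        by (simp only: eqi)
      also have "\<dots> = ((1/2) * (u * w))^2 * (\<Sum>i\<in>UNIV. (q i)^2)" by (rule sum_distrib_left[symmetric])
      finally show ?thesis .
    qed
    also have "\<dots> \<le> ((1/2) * (u * w))^2 * ((norm d)^2 * (L^2 * (norm d)^2))"
    proof (rule mult_left_mono)
      have "(\<Sum>i\<in>UNIV. (q i)^2) \<le> (\<Sum>i\<in>UNIV. (norm d)^2 * (norm (Q i *v d))^2)"
      proof (rule sum_mono)
        fix i
        have "\<bar>q i\<bar> \<le> norm d * norm (Q i *v d)" unfolding q_def by (rule Cauchy_Schwarz_ineq2)
        then have "\<bar>q i\<bar>^2 \<le> (norm d * norm (Q i *v d))^2" by (rule power_mono) simp
        then show "(q i)^2 \<le> (norm d)^2 * (norm (Q i *v d))^2" by (simp add: power_mult_distrib)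
      qed
      also have "\<dots> = (norm d)^2 * (\<Sum>i\<in>UNIV. (norm (Q i *v d))^2)" by (simp add: sum_distrib_left)
      also have "\<dots> \<le> (norm d)^2 * (L^2 * (norm d)^2)" by (rule mult_left_mono[OF Qbnd]) simp
      finally show "(\<Sum>i\<in>UNIV. (q i)^2) \<le> (norm d)^2 * (L^2 * (norm d)^2)" .
    qed simp
    also have "\<dots> = (L * k / 2)^2" by (simp add: k_def power_mult_distrib power2_eq_square)
    finally show "(\<Sum>i\<in>UNIV. (- ((1/2) * (u * w) * q i))^2) \<le> (L * k / 2)^2" .
    show "0 \<le> L * k / 2" using Lpos k0 by simp
  qed
  have sq1: "(norm x1)^2 \<le> \<epsilon>^2" using x1(1) by (rule power_mono) simp
  have sq2: "(norm x2)^2 \<le> \<epsilon>^2" using x2(1) by (rule power_mono) simp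
  have nz2: "(norm z)^2 = u * (norm x1)^2 + w * (norm x2)^2 - k"
    unfolding z_def k_def d_def by (rule norm_comb[OF uw1])
  have "u * (norm x1)^2 + w * (norm x2)^2 \<le> u * \<epsilon>^2 + w * \<epsilon>^2"
    using mult_left_mono[OF sq1 u0] mult_left_mono[OF sq2 w0] by linarith
  also have "\<dots> = \<epsilon>^2" using uw1 by (simp add: distrib_right[symmetric])
  finally have nzk: "(norm z)^2 \<le> \<epsilon>^2 - k" using nz2 by linarith
  have e0: "\<epsilon> \<ge> 0" using x1(1) norm_ge_zero[of x1] by linarith
  have zle: "norm z \<le> \<epsilon>"
  proof -
    have "(norm z)^2 \<le> \<epsilon>^2" using nzk k0 by linarith
    then show ?thesis using e0 by (rule power2_le_imp_le)
  qed
  have Yin: "\<exists>x. norm x \<le> \<epsilon> \<and> f x = Y"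
  proof (cases "norm (f z - Y) = 0")
    case True
    then show ?thesis using zle by auto
  next
    case False
    then have fpos: "norm (f z - Y) > 0" by simp
    have kpos: "k > 0"
    proof (rule ccontr)
      assume "\<not> k > 0"
      then have "k = 0" using k0 by simp
      then have "norm (f z - Y) \<le> 0" using fzY by simp
      then show False using fpos by simp
    qed
    have epos: "\<epsilon> > 0"
    proof (rule ccontr)
      assume "\<not> \<epsilon> > 0"
      then have "\<epsilon> = 0" using e0 by simp
      then have "(norm z)^2 \<le> - k" using nzk by simp
      moreover have "(norm z)^2 \<ge> 0" by simp
      ultimately show False using kpos by linarith
    qed
    have key1: "k \<le> (\<epsilon> - norm z) * (2 * \<epsilon>)"
    proof -
      have "k \<le> \<epsilon>^2 - (norm z)^2" using nzk by linarith
      also have "\<dots> = (\<epsilon> - norm z) * (\<epsilon> + norm z)" by (simp add: power2_eq_square algebra_simps)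
      also have "\<dots> \<le> (\<epsilon> - norm z) * (2 * \<epsilon>)" using zle by (intro mult_left_mono) simp_all
      finally show ?thesis .
    qed
    have m: "\<nu> - L * \<epsilon> > L * \<epsilon>" using eps by simp
    have "2 * \<epsilon> * norm (f z - Y) \<le> 2 * \<epsilon> * (L * k / 2)" using fzY epos by simp
    also have "\<dots> = (L * \<epsilon>) * k" by simp
    also have "\<dots> < (\<nu> - L * \<epsilon>) * k" using m kpos by simp
    also have "\<dots> \<le> (\<nu> - L * \<epsilon>) * ((\<epsilon> - norm z) * (2 * \<epsilon>))"
    proof (rule mult_left_mono[OF key1])
      have "L * \<epsilon> > 0" using Lpos epos by simp
      then show "0 \<le> \<nu> - L * \<epsilon>" using m by linarith
    qed
    finally have "(2 * \<epsilon>) * norm (f z - Y) < (2 * \<epsilon>) * ((\<nu> - L * \<epsilon>) * (\<epsilon> - norm z))"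
      by (simp add: algebra_simps)
    then have close: "norm (f z - Y) < (\<nu> - L * \<epsilon>) * (\<epsilon> - norm z)" using epos by simp
    show ?thesis by (rule exist_preimage[OF sym f_def Abnd Qbnd Lpos zle close])
  qed
  then obtain x where xe: "norm x \<le> \<epsilon>" and fx: "f x = Y" by blast
  have "Y = f x \<and> norm x \<le> \<epsilon>" using xe fx by simp
  then have "\<exists>x. Y = f x \<and> norm x \<le> \<epsilon>" by (rule exI)
  then have "Y \<in> {f x | x. norm x \<le> \<epsilon>}" by (simp only: mem_Collect_eq)
  then show "u *\<^sub>R Y1 + w *\<^sub>R Y2 \<in> {f x | x. norm x \<le> \<epsilon>}" by (simp only: Y_def)
qed



theorem theorem2:
  fixes Q :: "'m::finite \<Rightarrow> real^'n::finite^'n"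
    and a :: "'m \<Rightarrow> real^'n"
    and f :: "real^'n \<Rightarrow> real^'m"
    and A :: "real^'m^'n"
    and L L_new \<nu> :: real
  assumes sym: "\<And>i. symmetric_mat (Q i)"
    and f_def: "\<And>x. f x = (\<chi> i. (1/2) * (x \<bullet> (Q i *v x)) + a i \<bullet> x)"
    and A_def: "A = (\<chi> j k. a k $ j)"
    and L_def: "L = sqrt (\<Sum>i\<in>UNIV. (spec_norm (Q i))\<^sup>2)"
    and Lnew_def: "L_new = sqrt (lambda_max (\<Sum>i\<in>UNIV. transpose (Q i) ** Q i))"
    and nu_def: "\<nu> = sigma_min A"
    and pos: "L_new > 0"
  shows "L_new \<le> L \<and>
         (\<forall>\<epsilon>::real. \<epsilon> < \<nu> / (2 * L_new) \<longrightarrow> convex {f x | x. norm x \<le> \<epsilon>})"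
proof -
  define S where "S = (\<Sum>i\<in>UNIV. transpose (Q i) ** Q i)"
  have symS: "symmetric_mat S" unfolding S_def by (rule sym_sum) (rule sym_QtQ)
  have quadS: "h \<bullet> (S *v h) = (\<Sum>i\<in>UNIV. (norm (Q i *v h))^2)" for h
    unfolding S_def sum_mv inner_sum_right quad_QtQ ..
  define lam where "lam = lambda_max S"
  have lamle: "(\<Sum>i\<in>UNIV. (norm (Q i *v h))^2) \<le> lam * (norm h)^2" for h
    using lambda_max_prop(2)[OF symS, of h] unfolding quadS lam_def by (simp add: power2_norm_eq_inner)
  have Lsq: "L_new = sqrt lam" using Lnew_def S_def lam_def by simp
  have lampos: "lam > 0" using pos Lsq by simp
  have Lnew2: "L_new^2 = lam" using Lsq lampos by simp
  have Qbnd: "(\<Sum>i\<in>UNIV. (norm (Q i *v h))^2) \<le> L_new^2 * (norm h)^2" for h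
    using lamle[of h] Lnew2 by simp
  have spec2: "(spec_norm (Q i))^2 = lambda_max (transpose (Q i) ** Q i)" for i
  proof -
    have s: "symmetric_mat (transpose (Q i) ** Q i)" by (rule sym_QtQ)
    obtain u where u: "u \<bullet> u = 1" "(transpose (Q i) ** Q i) *v u = lambda_max (transpose (Q i) ** Q i) *\<^sub>R u"
      using lambda_max_prop(1)[OF s] by (rule eig_quad)
    have "lambda_max (transpose (Q i) ** Q i) = u \<bullet> ((transpose (Q i) ** Q i) *v u)" using u by simp
    also have "\<dots> = (norm (Q i *v u))^2" by (rule quad_QtQ)
    finally have "lambda_max (transpose (Q i) ** Q i) \<ge> 0" by simp
    then show ?thesis by (simp add: spec_norm_def)
  qed
  have specle: "(norm (Q i *v h))^2 \<le> (spec_norm (Q i))^2 * (h \<bullet> h)" for i h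
    using lambda_max_prop(2)[OF sym_QtQ[of "Q i"], of h] unfolding quad_QtQ spec2 .
  obtain v where v: "v \<bullet> v = 1" "S *v v = lam *\<^sub>R v"
    using lambda_max_prop(1)[OF symS] unfolding lam_def[symmetric] by (rule eig_quad)
  have "lam = v \<bullet> (S *v v)" using v by simp
  also have "\<dots> = (\<Sum>i\<in>UNIV. (norm (Q i *v v))^2)" by (rule quadS)
  also have "\<dots> \<le> (\<Sum>i\<in>UNIV. (spec_norm (Q i))^2)"
    by (rule sum_mono) (use specle[of _ v] v(1) in simp)
  finally have "lam \<le> (\<Sum>i\<in>UNIV. (spec_norm (Q i))^2)" .
  then have part1: "L_new \<le> L" unfolding Lsq L_def by (rule real_sqrt_le_mono)
  define lmn where "lmn = lambda_min (transpose A ** A)"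
  have symA: "symmetric_mat (transpose A ** A)" by (rule sym_QtQ)
  have lmnle: "lmn * (w \<bullet> w) \<le> (norm (A *v w))^2" for w
    using lambda_min_prop(2)[OF symA, of w] unfolding quad_QtQ lmn_def .
  have lmn0: "lmn \<ge> 0"
  proof -
    obtain u where u: "u \<bullet> u = 1" "(transpose A ** A) *v u = lmn *\<^sub>R u"
      using lambda_min_prop(1)[OF symA] unfolding lmn_def[symmetric] by (rule eig_quad)
    have "lmn = u \<bullet> ((transpose A ** A) *v u)" using u by simp
    also have "\<dots> = (norm (A *v u))^2" by (rule quad_QtQ)
    finally show ?thesis by simp
  qed
  have nu2: "\<nu> = sqrt lmn" by (simp add: nu_def sigma_min_def lmn_def)
  have Av: "A *v w = (\<Sum>k\<in>UNIV. w$k *\<^sub>R a k)" for w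
    by (simp add: A_def matrix_vector_mult_def vec_eq_iff sum_component mult.commute)
  have Abnd: "\<nu> * norm w \<le> norm (\<Sum>k\<in>UNIV. w$k *\<^sub>R a k)" for w :: "real^'m"
  proof (rule power2_le_imp_le)
    have "(\<nu> * norm w)^2 = lmn * (w \<bullet> w)" using lmn0 by (simp add: nu2 power_mult_distrib power2_norm_eq_inner)
    also have "\<dots> \<le> (norm (A *v w))^2" by (rule lmnle)
    finally show "(\<nu> * norm w)^2 \<le> (norm (\<Sum>k\<in>UNIV. w$k *\<^sub>R a k))^2" unfolding Av .
  qed simp
  have part2: "\<forall>\<epsilon>::real. \<epsilon> < \<nu> / (2 * L_new) \<longrightarrow> convex {f x | x. norm x \<le> \<epsilon>}"
  proof (intro allI impI)
    fix \<epsilon> :: real assume e: "\<epsilon> < \<nu> / (2 * L_new)"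
    have "2 * L_new * \<epsilon> < \<nu>" using e pos by (simp add: pos_less_divide_eq mult.commute)
    then show "convex {f x | x. norm x \<le> \<epsilon>}"
      by (rule image_convex[OF sym f_def Abnd Qbnd pos])
  qed
  show ?thesis using part1 part2 by blast
qed

end
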